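(* $|\sqrt\lambda\,\lambda_2|=1$, $(\sqrt\lambda\,\lambda_2)^k\neq1$ for every positive integer $k$, and the set $\{(\sqrt\lambda\,\lambda_2)^n:n\in\mathbb{N}\}$ is a dense subset of the unit circle in $\mathbb{C}$.
   Context: Standing setup: $p,q\in\mathbb{Z}$ are such that $x^3-px-q$ is irreducible over $\mathbb{Q}$ with exactly one real root $\theta$ (one has $3\theta^2-4p>0$). $K=\mathbb{Q}(\theta)\subset\mathbb{R}$, $\mathcal{O}_K$ its ring of integers. $\sigma_2:K\to\mathbb{C}$ is the embedding with $\sigma_2(\theta)=\frac{-\theta+i\sqrt{3\theta^2-4p}}{2}$, and $\lambda_2=\sigma_2(\lambda)$. $\lambda\in\mathcal{O}_K$ is a unit with $\lambda>1$, and $\sqrt\lambda>0$ is its positive square root. *)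

theory Defs
  imports "HOL-Analysis.Analysis" "HOL-Computational_Algebra.Computational_Algebra"
begin

definition cubic :: "int \<Rightarrow> int \<Rightarrow> 'a::comm_ring_1 poly" where
  "cubic p q = [:- of_int q, - of_int p, 0, 1:]"

text \<open>Image of theta under the complex embedding sigma_2.\<close>
definition theta2 :: "int \<Rightarrow> real \<Rightarrow> complex" where
  "theta2 p \<theta> = (- complex_of_real \<theta> + \<i> * complex_of_real (sqrt (3 * \<theta>^2 - 4 * of_int p))) / 2"

text \<open>sigma_2 applied to the element a + b theta + c theta^2 of K = Q(theta)
  (1, theta, theta^2 is a Q-basis of K).\<close>
definition sigma2 :: "int \<Rightarrow> real \<Rightarrow> rat \<Rightarrow> rat \<Rightarrow> rat \<Rightarrow> complex" where
  "sigma2 p \<theta> a b c = of_rat a + of_rat b * theta2 p \<theta> + of_rat c * (theta2 p \<theta>)^2"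

end

theory Submission
  imports Defs "HOL-Computational_Algebra.Field_as_Ring"
begin


lemma map_poly_add_hom:
  assumes "f 0 = 0" "\<And>x y. f (x + y) = f x + f y"
  shows "map_poly f (p + q) = map_poly f p + map_poly f q"
  by (intro poly_eqI) (simp add: coeff_map_poly assms)

lemma map_poly_mult_hom:
  fixes f :: "'a::comm_ring_1 \<Rightarrow> 'b::comm_ring_1"
  assumes "f 0 = 0" "\<And>x y. f (x + y) = f x + f y" "\<And>x y. f (x * y) = f x * f y"
  shows "map_poly f (p * q) = map_poly f p * map_poly f q"
proof (induction p)
  case 0 then show ?case by simp
next
  case (pCons a p)
  have "map_poly f (pCons a p * q) = map_poly f (smult a q + pCons 0 (p * q))" by simp
  also have "\<dots> = smult (f a) (map_poly f q) + pCons 0 (map_poly f p * map_poly f q)"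
    by (simp add: map_poly_add_hom assms map_poly_smult map_poly_pCons pCons.IH)
  also have "\<dots> = map_poly f (pCons a p) * map_poly f q"
    by (simp add: map_poly_pCons assms)
  finally show ?case .
qed

abbreviation mapC :: "rat poly \<Rightarrow> complex poly" where "mapC \<equiv> map_poly of_rat"

lemma mapC_add: "mapC (p + q) = mapC p + mapC q"
  by (rule map_poly_add_hom) (auto simp: of_rat_add)
lemma mapC_mult: "mapC (p * q) = mapC p * mapC q"
  by (rule map_poly_mult_hom) (auto simp: of_rat_add of_rat_mult)
lemma poly_mapC_power: "poly (mapC (p ^ n)) z = poly (mapC p) z ^ n"
  by (induction n) (auto simp: mapC_mult)
lemma poly_mapC_const: "poly (mapC [:a:]) z = of_rat a"
  by (simp add: map_poly_pCons)
lemma poly_mapC_pcompose: "poly (mapC (pcompose A B)) z = poly (mapC A) (poly (mapC B) z)"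
proof (induction A)
  case 0 then show ?case by simp
next
  case (pCons a A)
  show ?case
    by (simp add: pcompose_pCons mapC_add mapC_mult poly_mapC_const pCons.IH map_poly_pCons)
qed

lemma map_int_mult: "map_poly (of_int :: int \<Rightarrow> 'a::comm_ring_1) (p * q) = map_poly of_int p * map_poly of_int q"
  by (rule map_poly_mult_hom) auto

lemma map_int_inj: "map_poly (of_int :: int \<Rightarrow> 'a::{comm_ring_1,ring_char_0}) p = map_poly of_int q \<Longrightarrow> p = q"
  by (metis coeff_map_poly of_int_0 of_int_eq_iff poly_eqI)

lemma denom_exists: "\<exists>d::int. d > 0 \<and> (\<forall>i. of_int d * coeff (f::rat poly) i \<in> \<int>)"
proof (induction f)
  case 0 then show ?case by (intro exI[of _ 1]) auto
next
  case (pCons a f)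
  then obtain d where d: "d > 0" "\<And>i. of_int d * coeff f i \<in> \<int>" by blast
  obtain n m where nm: "quotient_of a = (n, m)" by (cases "quotient_of a")
  then have m: "m > 0" and a: "a = of_int n / of_int m"
    using quotient_of_denom_pos quotient_of_div by blast+
  show ?case
  proof (intro exI[of _ "d * m"] conjI allI)
    show "d * m > 0" using d m by simp
    fix i
    show "of_int (d * m) * coeff (pCons a f) i \<in> \<int>"
    proof (cases i)
      case 0
      have "of_int (d * m) * a = of_int (d * n)" using m a by simp
      then show ?thesis using 0 by (metis Ints_of_int coeff_pCons_0)
    next
      case (Suc j)
      have "of_int (d * m) * coeff f j = of_int m * (of_int d * coeff f j)" by simp
      also have "\<dots> \<in> \<int>" using d(2)[of j] by simp
      finally show ?thesis using Suc by simp
    qed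
  qed
qed

lemma prim_exists:
  fixes f :: "rat poly"
  assumes "lead_coeff f = 1"
  shows "\<exists>F u. content F = 1 \<and> map_poly of_int F = smult (of_int u) f"
proof -
  obtain d where d: "d > 0" "\<And>i. of_int d * coeff f i \<in> \<int>" using denom_exists by blast
  have "\<And>i. coeff (smult (of_int d) f) i \<in> \<int>" using d by simp
  then obtain F0 where F0: "smult (of_int d) f = map_poly of_int F0" by (rule intpolyE)
  have "f \<noteq> 0" using assms by auto
  have "F0 \<noteq> 0" using F0 d \<open>f \<noteq> 0\<close> by (metis map_poly_0 of_int_eq_0_iff smult_eq_0_iff less_irrefl)
  define c where "c = content F0"
  define F where "F = primitive_part F0"
  have c0: "c \<noteq> 0" using \<open>F0 \<noteq> 0\<close> by (simp add: c_def)
  have cF: "content F = 1" using \<open>F0 \<noteq> 0\<close> by (simp add: F_def)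
  have "F0 = smult c F" by (simp add: F_def c_def)
  then have "map_poly of_int F0 = smult (of_int c) (map_poly (of_int :: int \<Rightarrow> rat) F)"
    by (simp add: map_poly_smult)
  with F0 have "smult (of_int c) (map_poly (of_int :: int \<Rightarrow> rat) F) = smult (of_int d) f" by simp
  then have "map_poly (of_int :: int \<Rightarrow> rat) F = smult (of_int d / of_int c) f"
    using c0 by (metis (no_types, lifting) divide_inverse mult.commute nonzero_divide_eq_eq of_int_eq_0_iff smult_smult smult_1_left)
  hence "map_poly (of_int :: int \<Rightarrow> rat) F = smult (of_int d / of_int c) f" .
  moreover have "lead_coeff (map_poly (of_int :: int \<Rightarrow> rat) F) = of_int (lead_coeff F)"
    by (simp add: degree_map_poly coeff_map_poly)
  ultimately have "of_int (lead_coeff F) = (of_int d / of_int c :: rat)"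
    using assms c0 d by simp
  with \<open>map_poly (of_int :: int \<Rightarrow> rat) F = smult (of_int d / of_int c) f\<close> cF show ?thesis
    by metis
qed

lemma gauss_monic:
  fixes f g :: "rat poly"
  assumes "lead_coeff f = 1" "lead_coeff g = 1" "\<And>i. coeff (f * g) i \<in> \<int>"
  shows "coeff f i \<in> \<int>"
proof -
  obtain F u where F: "content F = 1" "map_poly of_int F = smult (of_int u) f"
    using prim_exists[OF assms(1)] by blast
  obtain G v where G: "content G = 1" "map_poly of_int G = smult (of_int v) g"
    using prim_exists[OF assms(2)] by blast
  obtain H where H: "f * g = map_poly of_int H" using assms(3) by (rule intpolyE)
  have "map_poly (of_int :: int \<Rightarrow> rat) (F * G) = map_poly of_int (smult (u * v) H)"
    by (simp add: map_int_mult F G map_poly_smult H[symmetric] mult_ac)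
  then have "F * G = smult (u * v) H" by (rule map_int_inj)
  then have "content (F * G) = normalize (u * v) * content H" by simp
  with F G have "1 = normalize (u * v) * content H" by (simp add: content_mult)
  then have "normalize (u * v) dvd 1" by (metis dvd_triv_left)
  then have "is_unit (u * v)" by simp
  then have "is_unit u" using is_unit_mult_iff by blast
  then have "u = 1 \<or> u = -1" using zdvd1_eq[of u] by arith
  then have "f = map_poly of_int F \<or> f = - map_poly of_int F" using F(2) by auto
  then show ?thesis
  proof
    assume "f = map_poly of_int F" then show ?thesis by (simp add: coeff_map_poly)
  next
    assume "f = - map_poly of_int F" then show ?thesis by (simp add: coeff_map_poly)
  qed
qed

lemma three_roots_int:
  fixes P :: "int poly" and x1 x2 x3 :: complex and r1 r2 r3 :: rat
  assumes P: "lead_coeff P = 1" and r1: "poly (map_poly of_int P) x1 = 0"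
    and r2: "poly (map_poly of_int P) x2 = 0" and r3: "poly (map_poly of_int P) x3 = 0"
    and d: "x1 \<noteq> x2" "x1 \<noteq> x3" "x2 \<noteq> x3"
    and e1: "x1 + x2 + x3 = of_rat s1" and e2: "x1*x2 + x1*x3 + x2*x3 = of_rat s2"
    and e3: "x1*x2*x3 = of_rat s3"
  shows "s3 \<in> \<int>"
proof -
  define ch :: "rat poly" where "ch = [:-s3, s2, -s1, 1:]"
  have pchi0: "poly (mapC ch) x = - of_rat s3 + x*(of_rat s2 + x*(- of_rat s1 + x))" for x
    by (simp add: ch_def map_poly_pCons of_rat_minus)
  have pchi: "poly (mapC ch) x = (x-x1)*(x-x2)*(x-x3)" for x
    unfolding pchi0 e1[symmetric] e2[symmetric] e3[symmetric] by algebra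
  have chi0: "ch \<noteq> 0" and dchi: "degree ch = 3" and lchi: "lead_coeff ch = 1"
    by (auto simp: ch_def)
  define Pq :: "rat poly" where "Pq = map_poly of_int P"
  have mP: "mapC Pq = map_poly of_int P"
    by (simp add: Pq_def map_poly_map_poly o_def)
  define R where "R = Pq mod ch"
  define Dv where "Dv = Pq div ch"
  have PDR: "Pq = Dv * ch + R" by (simp add: R_def Dv_def)
  have mPDR: "mapC Pq = mapC Dv * mapC ch + mapC R"
    by (subst PDR) (simp add: mapC_add mapC_mult)
  have rootR: "poly (mapC R) x = 0" if "x \<in> {x1, x2, x3}" for x
  proof -
    have "poly (mapC Pq) x = 0" using that r1 r2 r3 mP by auto
    moreover have "poly (mapC ch) x = 0" using that by (auto simp: pchi)
    ultimately show ?thesis using mPDR by (metis add_0 mult_zero_right poly_add poly_mult)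
  qed
  have R0: "R = 0"
  proof (rule ccontr)
    assume "R \<noteq> 0"
    then have "degree R < 3" using degree_mod_less[OF chi0, of Pq] dchi by (simp add: R_def)
    have inj: "\<And>x. x \<noteq> 0 \<Longrightarrow> (of_rat x :: complex) \<noteq> 0" by simp
    have mR0: "mapC R \<noteq> 0" using \<open>R \<noteq> 0\<close> by (simp add: map_poly_eq_0_iff)
    have "card {x. poly (mapC R) x = 0} \<le> degree (mapC R)"
      by (rule card_poly_roots_bound[OF mR0])
    also have "degree (mapC R) = degree R" by (rule degree_map_poly) simp
    finally have c1: "card {x. poly (mapC R) x = 0} < 3" using \<open>degree R < 3\<close> by simp
    have "card {x1, x2, x3} \<le> card {x. poly (mapC R) x = 0}"
      by (rule card_mono) (use poly_roots_finite[OF mR0] rootR in auto)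
    moreover have "card {x1, x2, x3} = 3" using d by simp
    ultimately show False using c1 by simp
  qed
  then have PD: "Pq = Dv * ch" using PDR by simp
  have "lead_coeff Pq = 1" using P by (simp add: Pq_def degree_map_poly coeff_map_poly)
  then have lD: "lead_coeff Dv = 1" using PD lchi by (simp add: lead_coeff_mult)
  have "\<And>i. coeff (ch * Dv) i \<in> \<int>"
    using PD by (metis mult.commute Pq_def coeff_map_poly of_int_0 Ints_of_int)
  from gauss_monic[OF lchi lD this, of 0] have "- s3 \<in> \<int>" by (simp add: ch_def)
  then show ?thesis by (metis minus_minus Ints_minus)
qed

lemma conj_root:
  fixes g h :: "rat poly" and z w :: complex
  assumes irr: "irreducible g" and gz: "poly (mapC g) z = 0" and gw: "poly (mapC g) w = 0"
    and hz: "poly (mapC h) z = 0"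
  shows "poly (mapC h) w = 0"
proof (cases "g dvd h")
  case True
  then obtain k where "h = g * k" by (elim dvdE)
  then show ?thesis using gw by (simp add: mapC_mult)
next
  case False
  have "prime_elem g" using irr by (rule field_poly_irreducible_imp_prime)
  then have "coprime g h" using False by (simp add: prime_elem_imp_coprime)
  then have "gcd g h = 1" by simp
  then have eq: "fst (bezout_coefficients g h) * g + snd (bezout_coefficients g h) * h = 1"
    using bezout_coefficients_fst_snd by metis
  have "poly (mapC (fst (bezout_coefficients g h) * g + snd (bezout_coefficients g h) * h)) z = 0"
    by (simp add: mapC_add mapC_mult gz hz)
  then show ?thesis by (simp add: eq)
qed

lemma conj_root_comp:
  fixes g A B :: "rat poly" and z w :: complex
  assumes irr: "irreducible g" and gz: "poly (mapC g) z = 0" and gw: "poly (mapC g) w = 0"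
    and hz: "poly (mapC A) (poly (mapC B) z) = 0"
  shows "poly (mapC A) (poly (mapC B) w) = 0"
  using conj_root[OF irr gz gw, of "pcompose A B"] hz by (simp add: poly_mapC_pcompose)



lemma dense_powers:
  fixes z :: complex
  assumes z1: "cmod z = 1" and nr: "\<forall>k::nat. k > 0 \<longrightarrow> z ^ k \<noteq> 1"
  shows "sphere 0 1 \<subseteq> closure (range (\<lambda>n::nat. z ^ n))"
proof
  fix w :: complex assume "w \<in> sphere 0 1"
  then have w1: "cmod w = 1" by simp
  have z0: "z \<noteq> 0" using z1 by auto
  have zc: "cis (Arg z) = z" using cis_Arg[OF z0] z1 by (simp add: sgn_div_norm)
  have "w \<noteq> 0" using w1 by auto
  then have wc: "cis (Arg w) = w" using cis_Arg[of w] w1 by (auto simp: sgn_div_norm)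
  define \<alpha> where "\<alpha> = Arg z / (2 * pi)"
  have za: "z = cis (2 * pi * \<alpha>)" using zc by (simp add: \<alpha>_def)
  have irr: "\<alpha> \<notin> \<rat>"
  proof
    assume "\<alpha> \<in> \<rat>"
    then obtain m n where mn: "n > 0" "\<alpha> = of_int m / of_int n" by (elim Rats_cases') 
    have "z ^ nat n = cis (real (nat n) * (2 * pi * \<alpha>))" using za Complex.DeMoivre by metis
    also have "real (nat n) * (2 * pi * \<alpha>) = 2 * pi * of_int m" using mn by simp
    also have "cis (2 * pi * of_int m) = 1" by simp
    finally show False using nr mn by auto
  qed
  define \<beta> where "\<beta> = Arg w / (2 * pi)"
  have wb: "w = cis (2 * pi * \<beta>)" using wc by (simp add: \<beta>_def)
  show "w \<in> closure (range (\<lambda>n::nat. z ^ n))"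
    unfolding closure_approachable
  proof (intro allI impI)
    fix e :: real assume "e > 0"
    have "continuous_on UNIV cis" by (intro continuous_intros continuous_on_id)
    then obtain d where d: "d > 0" "\<And>x. dist x (2 * pi * \<beta>) < d \<Longrightarrow> dist (cis x) (cis (2 * pi * \<beta>)) < e"
      using \<open>e > 0\<close> unfolding continuous_on_iff by blast
    obtain h k where hk: "k > 0" "\<bar>of_int k * \<alpha> - of_int h - \<beta>\<bar> < d / (2 * pi)"
      using sequence_of_fractional_parts_is_dense[OF irr, of "d / (2*pi)" \<beta>] d(1) by (metis divide_pos_pos pi_gt_zero zero_less_numeral mult_pos_pos)
    have "dist (2 * pi * (of_int k * \<alpha> - of_int h)) (2 * pi * \<beta>) = 2 * pi * \<bar>of_int k * \<alpha> - of_int h - \<beta>\<bar>"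
      by (simp add: dist_real_def right_diff_distrib[symmetric] abs_mult)
    also have "\<dots> < d" using hk(2) by (simp add: field_simps)
    finally have "dist (cis (2 * pi * (of_int k * \<alpha> - of_int h))) w < e" using d(2) wb by simp
    moreover have "cis (2 * pi * (of_int k * \<alpha> - of_int h)) = z ^ nat k"
    proof -
      have "cis (2 * pi * (of_int k * \<alpha> - of_int h)) = cis (real (nat k) * (2 * pi * \<alpha>)) * cis (- (2 * pi * of_int h))"
        using hk(1) by (simp add: cis_mult algebra_simps)
      also have "cis (- (2 * pi * of_int h)) = 1"
        by (metis cis_multiple_2pi Ints_minus Ints_of_int mult_minus_right of_int_minus)
      finally show ?thesis using za Complex.DeMoivre by simp
    qed
    ultimately show "\<exists>x\<in>range (\<lambda>n::nat. z ^ n). dist x w < e" by (metis rangeI)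
  qed
qed


lemma cubic_root_aux:
  fixes x t P Q :: "'a::field_char_0"
  assumes "t^3 = P*t + Q" "(2*x+t)^2 = 4*P - 3*t^2"
  shows "x^3 - P*x - Q = 0"
  using assms by algebra

lemma poly_cubic: "poly (cubic p q) x = x^3 - of_int p * x - of_int q"
  by (simp add: cubic_def algebra_simps power3_eq_cube)

lemma mapC_cubic: "mapC (cubic p q) = cubic p q"
  by (simp add: cubic_def map_poly_pCons of_rat_minus)

lemma cnj_of_rat [simp]: "cnj (of_rat r) = of_rat r"
  by (cases r) (simp add: of_rat_rat)

lemma Ints_01: "(x::'a::linordered_idom) \<in> \<int> \<Longrightarrow> 0 < x \<Longrightarrow> x < 1 \<Longrightarrow> False"
  by (metis Ints_cases of_int_0_less_iff of_int_less_1_iff zless_imp_add1_zle add_0 not_le)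

lemma theta_irr:
  assumes irr: "irreducible (cubic p q :: rat poly)" and root: "poly (cubic p q) (\<theta>::real) = 0"
  shows "\<theta> \<notin> \<rat>"
proof
  assume "\<theta> \<in> \<rat>"
  then obtain r where r: "\<theta> = of_rat r" by (elim Rats_cases)
  have "of_rat (poly (cubic p q) r) = (poly (cubic p q) \<theta>)"
    by (simp add: poly_cubic r of_rat_diff of_rat_mult of_rat_power)
  then have "poly (cubic p q :: rat poly) r = 0" using root by simp
  then have "[:-r, 1:] dvd (cubic p q :: rat poly)" by (simp add: poly_eq_0_iff_dvd)
  then obtain k where k: "(cubic p q :: rat poly) = [:-r, 1:] * k" by (elim dvdE)
  have "is_unit [:-r, 1:] \<or> is_unit k" using irreducibleD[OF irr k] .
  moreover have "\<not> is_unit [:-r, 1::rat:]" by (simp add: is_unit_iff_degree)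
  moreover have "k \<noteq> 0" using k by (auto simp: cubic_def)
  ultimately have "degree k = 0" by (simp add: is_unit_iff_degree)
  moreover have "degree (cubic p q :: rat poly) = degree [:-r,1::rat:] + degree k"
    unfolding k by (rule degree_mult_eq) (use \<open>k \<noteq> 0\<close> in auto)
  ultimately have "degree (cubic p q :: rat poly) = 1" by simp
  then show False by (simp add: cubic_def)
qed

lemma deg2_poly:
  fixes P :: "'a::comm_ring_1 poly"
  assumes "degree P \<le> 2"
  shows "poly P y = coeff P 0 + coeff P 1 * y + coeff P 2 * y^2"
proof -
  have "P = [:coeff P 0, coeff P 1, coeff P 2:]"
  proof (rule poly_eqI)
    fix n show "coeff P n = coeff [:coeff P 0, coeff P 1, coeff P 2:] n"
    proof (cases "n \<le> 2")
      case True
      then have "n = 0 \<or> n = 1 \<or> n = 2" by auto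
      then show ?thesis by (auto simp: numeral_2_eq_2)
    next
      case False
      then show ?thesis using assms by (auto simp: coeff_eq_0 coeff_pCons split: nat.split)
    qed
  qed
  then have "poly P y = poly [:coeff P 0, coeff P 1, coeff P 2:] y" by simp
  then show ?thesis by (simp add: algebra_simps power2_eq_square)
qed

lemma of_real_of_rat_C: "complex_of_real (of_rat r) = of_rat r"
  by (cases r) (simp add: of_rat_rat)

lemma mapC_of_int: "mapC (map_poly of_int P) = map_poly of_int P"
  by (simp add: map_poly_map_poly o_def)

lemma mapC_reflect: "mapC (reflect_poly h) = reflect_poly (mapC h)"
  by (rule poly_eqI) (simp add: coeff_reflect_poly coeff_map_poly degree_map_poly)

lemma poly_mapC_reflect:
  assumes "y \<noteq> 0"
  shows "poly (mapC (reflect_poly h)) y = y ^ degree (mapC h) * poly (mapC h) (inverse y)"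
  unfolding mapC_reflect using assms by (rule poly_reflect_poly_nz)

theorem mainTheorem13:
  fixes p q :: int and \<theta> lam :: real and a b c :: rat
  assumes irred: "irreducible (cubic p q :: rat poly)"
    and root: "poly (cubic p q) \<theta> = 0"
    and unique_real_root: "\<forall>x::real. poly (cubic p q) x = 0 \<longrightarrow> x = \<theta>"
    and inK: "lam = of_rat a + of_rat b * \<theta> + of_rat c * \<theta>^2"
    and integral: "algebraic_int lam"
    and unit: "algebraic_int (1 / lam)"
    and gt1: "lam > 1"
  shows "let z = complex_of_real (sqrt lam) * sigma2 p \<theta> a b c in
           cmod z = 1 \<and> (\<forall>k::nat. k > 0 \<longrightarrow> z ^ k \<noteq> 1) \<and>
           range (\<lambda>n::nat. z ^ n) \<subseteq> sphere 0 1 \<and>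
           sphere 0 1 \<subseteq> closure (range (\<lambda>n::nat. z ^ n))"
proof -
  define g :: "rat poly" where "g = cubic p q"
  have t3: "\<theta>^3 = of_int p * \<theta> + of_int q" using root by (simp add: poly_cubic)
  have thirr: "\<theta> \<notin> \<rat>" using theta_irr[OF irred root] .
  have Dpos: "3 * \<theta>^2 - 4 * of_int p > 0"
  proof (rule ccontr)
    assume "\<not> ?thesis"
    then have E: "4 * of_int p - 3 * \<theta>^2 \<ge> 0" by simp
    define E where "E = 4 * of_int p - 3 * \<theta>^2"
    have sE: "sqrt E ^ 2 = E" using E by (simp add: E_def)
    have "poly (cubic p q) ((- \<theta> + sqrt E) / 2) = 0"
      unfolding poly_cubic
      by (rule cubic_root_aux[OF t3]) (unfold E_def[symmetric], simp add: sE)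
    then have 1: "(- \<theta> + sqrt E) / 2 = \<theta>" using unique_real_root by blast
    have "poly (cubic p q) ((- \<theta> - sqrt E) / 2) = 0"
      unfolding poly_cubic
      by (rule cubic_root_aux[OF t3]) (unfold E_def[symmetric], simp add: sE)
    then have 2: "(- \<theta> - sqrt E) / 2 = \<theta>" using unique_real_root by blast
    from 1 2 have "\<theta> = 0" by simp
    then show False using thirr by simp
  qed
  define s where "s = sqrt (3 * \<theta>^2 - 4 * of_int p)"
  have s0: "s > 0" and s2: "s^2 = 3 * \<theta>^2 - 4 * of_int p" using Dpos by (auto simp: s_def)
  define \<Theta> where "\<Theta> = complex_of_real \<theta>"
  define \<omega> where "\<omega> = theta2 p \<theta>"
  have \<omega>: "2 * \<omega> + \<Theta> = \<i> * of_real s"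
    by (simp add: \<omega>_def theta2_def \<Theta>_def s_def)
  have \<omega>c: "2 * cnj \<omega> + \<Theta> = - \<i> * of_real s"
    using arg_cong[OF \<omega>, of cnj] unfolding \<Theta>_def by simp
  have s2C: "(of_real s :: complex)^2 = 3 * \<Theta>^2 - 4 * of_int p"
    using arg_cong[OF s2, of complex_of_real] by (simp add: \<Theta>_def)
  have t3C: "\<Theta>^3 = of_int p * \<Theta> + of_int q"
    using arg_cong[OF t3, of complex_of_real] by (simp add: \<Theta>_def)
  have gT: "poly (mapC g) \<Theta> = 0"
    unfolding g_def mapC_cubic poly_cubic by (simp add: t3C)
  have gw: "poly (mapC g) \<omega> = 0"
    unfolding g_def mapC_cubic poly_cubic by (rule cubic_root_aux[OF t3C]) (simp add: \<omega> s2C power_mult_distrib)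
  have gwc: "poly (mapC g) (cnj \<omega>) = 0"
    unfolding g_def mapC_cubic poly_cubic by (rule cubic_root_aux[OF t3C]) (simp add: \<omega>c s2C power_mult_distrib)
  have e1: "\<omega> = (\<i> * of_real s - \<Theta>) / 2" using \<omega> by (simp add: field_simps)
  have e2: "cnj \<omega> = (- \<i> * of_real s - \<Theta>) / 2" using \<omega>c by (simp add: field_simps)
  have sum\<omega>: "\<omega> + cnj \<omega> = - \<Theta>" unfolding e1 by (simp add: field_simps \<Theta>_def)
  have prod\<omega>: "\<omega> * cnj \<omega> = \<Theta>^2 - of_int p"
  proof -
    have "\<omega> * cnj \<omega> = (\<Theta>^2 + (of_real s)^2) / 4" unfolding e1
      by (simp add: field_simps power2_eq_square \<Theta>_def)
    also have "\<dots> = \<Theta>^2 - of_int p" by (simp add: s2C field_simps)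
    finally show ?thesis .
  qed
  have dif\<omega>: "\<omega> - cnj \<omega> = \<i> * of_real s" unfolding e1 by (simp add: field_simps \<Theta>_def)
  define f :: "rat poly" where "f = [:a, b, c:]"
  have pf: "poly (mapC f) x = of_rat a + of_rat b * x + of_rat c * x^2" for x
    by (simp add: f_def map_poly_pCons algebra_simps power2_eq_square)
  define x1 where "x1 = complex_of_real lam"
  define x2 where "x2 = sigma2 p \<theta> a b c"
  define x3 where "x3 = cnj x2"
  have fx1: "poly (mapC f) \<Theta> = x1"
    by (simp add: pf x1_def inK \<Theta>_def of_real_of_rat_C)
  have fx2: "poly (mapC f) \<omega> = x2"
    by (simp add: pf x2_def sigma2_def \<omega>_def)
  have fx3: "poly (mapC f) (cnj \<omega>) = x3"
    by (simp add: pf x3_def fx2[symmetric])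
  define A where "A = (of_rat a :: complex)"
  define B where "B = (of_rat b :: complex)"
  define C where "C = (of_rat c :: complex)"
  define Pc where "Pc = (of_int p :: complex)"
  define Qc where "Qc = (of_int q :: complex)"
  have X1: "x1 = A + B * \<Theta> + C * \<Theta>^2" using fx1 pf A_def B_def C_def by simp
  have X2: "x2 = A + B * \<omega> + C * \<omega>^2" using fx2 pf A_def B_def C_def by simp
  have X3: "x3 = A + B * cnj \<omega> + C * (cnj \<omega>)^2" using fx3 pf A_def B_def C_def by simp
  have t3c: "\<Theta>^3 = Pc * \<Theta> + Qc" using t3C by (simp add: Pc_def Qc_def)
  have S\<omega>: "\<omega> + cnj \<omega> = - \<Theta>" using sum\<omega> .
  have P\<omega>: "\<omega> * cnj \<omega> = \<Theta>^2 - Pc" using prod\<omega> by (simp add: Pc_def)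
  have s23a: "x2 + x3 = 2*A + B*(\<omega> + cnj \<omega>) + C*((\<omega> + cnj \<omega>)^2 - 2*(\<omega> * cnj \<omega>))"
    unfolding X2 X3 by (simp add: algebra_simps power2_eq_square)
  have s23: "x2 + x3 = 2*A - B*\<Theta> + C*(2*Pc - \<Theta>^2)"
    unfolding s23a S\<omega> P\<omega> by (simp add: algebra_simps power2_eq_square)
  have p23a: "x2 * x3 = A^2 + A*B*(\<omega> + cnj \<omega>) + A*C*((\<omega> + cnj \<omega>)^2 - 2*(\<omega> * cnj \<omega>))
      + B^2*(\<omega> * cnj \<omega>) + B*C*(\<omega> * cnj \<omega>)*(\<omega> + cnj \<omega>) + C^2*(\<omega> * cnj \<omega>)^2"
    unfolding X2 X3 by (simp add: algebra_simps power2_eq_square)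
  have p23: "x2 * x3 = A^2 - A*B*\<Theta> + A*C*(2*Pc - \<Theta>^2)
      + B^2*(\<Theta>^2 - Pc) - B*C*(\<Theta>^2 - Pc)*\<Theta> + C^2*(\<Theta>^2 - Pc)^2"
    unfolding p23a S\<omega> P\<omega> by (simp add: algebra_simps power2_eq_square)
  define r1 :: rat where "r1 = 3*a + 2*c * of_int p"
  define r2 :: rat where "r2 = 3*a^2 + 4*a*c * of_int p - b^2 * of_int p - 3*b*c * of_int q + c^2*(of_int p)^2"
  define r3 :: rat where "r3 = a^3 + 2*a^2*c * of_int p - a*b^2 * of_int p - 3*a*b*c * of_int q
      + a*c^2*(of_int p)^2 + b^3 * of_int q - b*c^2 * of_int p * of_int q + c^3*(of_int q)^2"
  have R1: "of_rat r1 = 3*A + 2*C*Pc"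
    by (simp add: r1_def A_def C_def Pc_def of_rat_add of_rat_mult)
  have R2: "of_rat r2 = 3*A^2 + 4*A*C*Pc - B^2*Pc - 3*B*C*Qc + C^2*Pc^2"
    by (simp add: r2_def A_def B_def C_def Pc_def Qc_def of_rat_add of_rat_mult of_rat_diff of_rat_power)
  have R3: "of_rat r3 = A^3 + 2*A^2*C*Pc - A*B^2*Pc - 3*A*B*C*Qc
      + A*C^2*Pc^2 + B^3*Qc - B*C^2*Pc*Qc + C^3*Qc^2"
    by (simp add: r3_def A_def B_def C_def Pc_def Qc_def of_rat_add of_rat_mult of_rat_diff of_rat_power)
  have E1: "x1 + x2 + x3 = of_rat r1"
    unfolding R1 add.assoc s23 X1 by (simp add: algebra_simps)
  have E2: "x1*x2 + x1*x3 + x2*x3 = of_rat r2"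
  proof -
    have "x1*x2 + x1*x3 + x2*x3 = x1*(x2+x3) + x2*x3" by (simp add: algebra_simps)
    also have "\<dots> = of_rat r2" unfolding s23 p23 X1 R2 using t3c by algebra
    finally show ?thesis .
  qed
  have E3: "x1*x2*x3 = of_rat r3"
  proof -
    have "x1*x2*x3 = x1*(x2*x3)" by (simp add: algebra_simps)
    also have "\<dots> = of_rat r3" unfolding p23 X1 R3 using t3c by algebra
    finally show ?thesis .
  qed
  have lam0: "lam > 0" using gt1 by simp
  have bc: "of_rat b - of_rat c * \<theta> \<noteq> 0"
  proof
    assume h: "of_rat b - of_rat c * \<theta> = 0"
    show False
    proof (cases "c = 0")
      case False
      then have "\<theta> = of_rat (b / c)" using h by (simp add: of_rat_divide field_simps)
      then show False using thirr by simp
    next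
      case True
      then have "b = 0" using h by simp
      with True have lr: "lam = of_rat a" using inK by simp
      then have "lam \<in> \<rat>" by simp
      then have "lam \<in> \<int>" using rational_algebraic_int_is_int integral by blast
      have "1 / lam \<in> \<rat>" using lr by simp
      then have "1 / lam \<in> \<int>" using rational_algebraic_int_is_int unit by blast
      moreover have "0 < 1 / lam" "1 / lam < 1" using gt1 by auto
      ultimately show False using Ints_01 by blast
    qed
  qed
  have d23: "x2 - x3 = \<i> * of_real s * complex_of_real (of_rat b - of_rat c * \<theta>)"
  proof -
    have "x2 - x3 = (\<omega> - cnj \<omega>) * (B + C * (\<omega> + cnj \<omega>))"
      unfolding X2 X3 by (simp add: algebra_simps power2_eq_square)
    also have "\<dots> = \<i> * of_real s * complex_of_real (of_rat b - of_rat c * \<theta>)"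
      unfolding dif\<omega> S\<omega> by (simp add: B_def C_def \<Theta>_def of_real_of_rat_C algebra_simps)
    finally show ?thesis .
  qed
  have n23: "x2 \<noteq> x3"
  proof
    assume "x2 = x3"
    then have "\<i> * of_real s * complex_of_real (of_rat b - of_rat c * \<theta>) = 0" using d23 by simp
    then have "complex_of_real (of_rat b - of_rat c * \<theta>) = 0" using s0 by simp
    then show False using bc by (simp only: of_real_eq_0_iff)
  qed
  have x1r: "cnj x1 = x1" by (simp add: x1_def)
  have n12: "x1 \<noteq> x2" using n23 x1r x3_def by auto
  have n13: "x1 \<noteq> x3" using n23 x1r x3_def by (metis complex_cnj_cnj)
  have x10: "x1 \<noteq> 0" using gt1 by (simp add: x1_def)
  have x20: "x2 \<noteq> 0" using n23 x3_def by auto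
  have x30: "x3 \<noteq> 0" using x20 x3_def by simp
  have "algebraic_int x1" using integral by (simp add: x1_def)
  then obtain Pi :: "int poly" where Pi: "poly (map_poly of_int Pi) x1 = 0" "lead_coeff Pi = 1"
    by (auto simp: algebraic_int_altdef_ipoly)
  define Pq :: "rat poly" where "Pq = map_poly of_int Pi"
  have PqC: "mapC Pq = map_poly of_int Pi" by (simp add: Pq_def mapC_of_int)
  have "poly (mapC Pq) (poly (mapC f) \<Theta>) = 0" using Pi PqC fx1 by simp
  note cr = conj_root_comp[OF irred[folded g_def] gT]
  have Pi2: "poly (map_poly of_int Pi) x2 = 0"
    using cr[OF gw \<open>poly (mapC Pq) (poly (mapC f) \<Theta>) = 0\<close>] PqC fx2 by simp
  have Pi3: "poly (map_poly of_int Pi) x3 = 0"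
    using cr[OF gwc \<open>poly (mapC Pq) (poly (mapC f) \<Theta>) = 0\<close>] PqC fx3 by simp
  have r3Z: "r3 \<in> \<int>"
    using three_roots_int[OF Pi(2) Pi(1) Pi2 Pi3 n12 n13 n23 E1 E2 E3] .
  have "algebraic_int (complex_of_real (1 / lam))" using unit by (rule algebraic_int_of_real)
  then have "algebraic_int (inverse x1)" by (simp add: x1_def divide_inverse)
  then obtain Ri :: "int poly" where Ri: "poly (map_poly of_int Ri) (inverse x1) = 0" "lead_coeff Ri = 1"
    by (auto simp: algebraic_int_altdef_ipoly)
  define Rq :: "rat poly" where "Rq = map_poly of_int Ri"
  have RqC: "mapC Rq = map_poly of_int Ri" by (simp add: Rq_def mapC_of_int)
  have "poly (mapC (reflect_poly Rq)) (poly (mapC f) \<Theta>) = 0"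
    using poly_mapC_reflect[OF x10, of Rq] Ri RqC fx1 by simp
  note rr = cr[OF _ this]
  have Ri2: "poly (map_poly of_int Ri) (inverse x2) = 0"
    using rr[OF gw] poly_mapC_reflect[OF x20, of Rq] RqC fx2 x20 by simp
  have Ri3: "poly (map_poly of_int Ri) (inverse x3) = 0"
    using rr[OF gwc] poly_mapC_reflect[OF x30, of Rq] RqC fx3 x30 by simp
  have r30: "r3 \<noteq> 0" using E3 x10 x20 x30 by (metis mult_eq_0_iff of_rat_eq_0_iff)
  have F1: "inverse x1 + inverse x2 + inverse x3 = of_rat (r2 / r3)"
  proof -
    have "inverse x1 + inverse x2 + inverse x3 = (x1*x2 + x1*x3 + x2*x3) / (x1*x2*x3)"
      using x10 x20 x30 by (simp add: divide_simps) (simp add: algebra_simps)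
    then show ?thesis by (simp add: E2 E3 of_rat_divide)
  qed
  have F2: "inverse x1 * inverse x2 + inverse x1 * inverse x3 + inverse x2 * inverse x3 = of_rat (r1 / r3)"
  proof -
    have "inverse x1 * inverse x2 + inverse x1 * inverse x3 + inverse x2 * inverse x3 = (x1 + x2 + x3) / (x1*x2*x3)"
      using x10 x20 x30 by (simp add: divide_simps)
    then show ?thesis by (simp add: E1 E3 of_rat_divide)
  qed
  have F3: "inverse x1 * inverse x2 * inverse x3 = of_rat (inverse r3)"
  proof -
    have "inverse x1 * inverse x2 * inverse x3 = inverse (x1*x2*x3)"
      by (simp add: inverse_mult_distrib)
    then show ?thesis by (simp add: E3 of_rat_inverse)
  qed
  have m12: "inverse x1 \<noteq> inverse x2" using n12 by simp
  have m13: "inverse x1 \<noteq> inverse x3" using n13 by simp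
  have m23: "inverse x2 \<noteq> inverse x3" using n23 by simp
  have ir3Z: "inverse r3 \<in> \<int>"
    using three_roots_int[OF Ri(2) Ri(1) Ri2 Ri3 m12 m13 m23 F1 F2 F3] .
  have x23: "x2 * x3 = complex_of_real (cmod x2 ^ 2)"
    unfolding x3_def complex_norm_square ..
  have "of_rat r3 = complex_of_real (lam * cmod x2 ^ 2)"
    using E3 x23 by (simp add: x1_def mult.assoc)
  then have r3real: "of_rat r3 = lam * cmod x2 ^ 2"
    by (metis of_real_of_rat_C of_real_eq_iff)
  have "lam * cmod x2 ^ 2 > 0" using lam0 x20 by simp
  then have "real_of_rat r3 > 0" using r3real by simp
  then have r3pos: "r3 > 0" by simp
  have r31: "r3 = 1"
  proof (rule ccontr)
    assume "r3 \<noteq> 1"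
    from r3Z obtain n where n: "r3 = of_int n" by (elim Ints_cases)
    then have "n > 1" using r3pos \<open>r3 \<noteq> 1\<close> by simp
    then have "r3 > 1" using n by simp
    then have "0 < inverse r3" "inverse r3 < 1" by (auto simp: inverse_less_1_iff)
    then show False using ir3Z Ints_01 by blast
  qed
  have N1: "lam * cmod x2 ^ 2 = 1" using r3real r31 by simp
  define z where "z = complex_of_real (sqrt lam) * sigma2 p \<theta> a b c"
  have zx: "z = of_real (sqrt lam) * x2" by (simp add: z_def x2_def)
  have cz: "cmod z = 1"
  proof -
    have "cmod z = sqrt lam * cmod x2" using lam0 by (simp add: zx norm_mult)
    also have "\<dots> = sqrt (lam * cmod x2 ^ 2)" by (simp add: real_sqrt_mult)
    also have "\<dots> = 1" using N1 by simp
    finally show ?thesis .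
  qed
  have nr: "\<forall>k::nat. k > 0 \<longrightarrow> z ^ k \<noteq> 1"
  proof (intro allI impI notI)
    fix k :: nat assume k: "k > 0" and zk: "z ^ k = 1"
    define h where "h = f ^ (2 * k)"
    have ph: "poly (mapC h) y = (poly (mapC f) y) ^ (2 * k)" for y by (simp add: h_def poly_mapC_power)
    have "z ^ (2 * k) = 1" using zk by (metis power_mult mult.commute power_one)
    moreover have "z ^ (2 * k) = of_real (lam ^ k) * x2 ^ (2 * k)"
    proof -
      have "(sqrt lam) ^ (2 * k) = lam ^ k" using lam0 by (simp add: power_mult)
      then show ?thesis by (simp add: zx power_mult_distrib flip: of_real_power)
    qed
    ultimately have x2k: "x2 ^ (2 * k) = of_real (inverse (lam ^ k))"
      using lam0 by (simp add: field_simps of_real_inverse)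
    have x3k: "x3 ^ (2 * k) = of_real (inverse (lam ^ k))"
      unfolding x3_def using arg_cong[OF x2k, of cnj] by simp
    have x1k: "x1 ^ (2 * k) = of_real (lam ^ (2 * k))" by (simp add: x1_def)
    define Rm where "Rm = h mod g"
    define Dm where "Dm = h div g"
    have hDR: "h = Dm * g + Rm" by (simp add: Rm_def Dm_def)
    have ev: "poly (mapC Rm) y = poly (mapC h) y" if "poly (mapC g) y = 0" for y
      using arg_cong[OF hDR, of "\<lambda>u. poly (mapC u) y"] by (simp add: mapC_add mapC_mult that)
    have g0: "g \<noteq> 0" and dg: "degree g = 3" by (auto simp: g_def cubic_def)
    have degRm: "degree Rm \<le> 2" using degree_mod_less[OF g0, of h] dg by (auto simp: Rm_def)
    have dRmC: "degree (mapC Rm) \<le> 2" using degRm by (simp add: degree_map_poly)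
    define c0 c1 c2 where "c0 = coeff Rm 0" and "c1 = coeff Rm 1" and "c2 = coeff Rm 2"
    have pR: "poly (mapC Rm) y = of_rat c0 + of_rat c1 * y + of_rat c2 * y^2" for y
      using deg2_poly[OF dRmC, of y] by (simp add: coeff_map_poly c0_def c1_def c2_def)
    have v2: "poly (mapC Rm) \<omega> = x2 ^ (2 * k)" using ev[OF gw] ph fx2 by simp
    have v3: "poly (mapC Rm) (cnj \<omega>) = x3 ^ (2 * k)" using ev[OF gwc] ph fx3 by simp
    have v1: "poly (mapC Rm) \<Theta> = x1 ^ (2 * k)" using ev[OF gT] ph fx1 by simp
    have "(\<omega> - cnj \<omega>) * (of_rat c1 + of_rat c2 * (\<omega> + cnj \<omega>)) = poly (mapC Rm) \<omega> - poly (mapC Rm) (cnj \<omega>)"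
      by (simp add: pR algebra_simps power2_eq_square)
    also have "\<dots> = 0" using v2 v3 x2k x3k by simp
    finally have "of_rat c1 + of_rat c2 * (\<omega> + cnj \<omega>) = 0" using dif\<omega> s0 by simp
    then have c12: "of_rat c1 = of_rat c2 * \<Theta>" using S\<omega> by (simp add: algebra_simps)
    have c20: "c2 = 0"
    proof (rule ccontr)
      assume "c2 \<noteq> 0"
      then have "\<Theta> = of_rat (c1 / c2)" using c12 by (simp add: of_rat_divide field_simps)
      then have "complex_of_real \<theta> = complex_of_real (of_rat (c1 / c2))" by (simp add: \<Theta>_def of_real_of_rat_C)
      then have "\<theta> = of_rat (c1 / c2)" by (simp only: of_real_eq_iff)
      then show False using thirr by simp
    qed
    then have c10: "c1 = 0" using c12 by simp
    have "x1 ^ (2 * k) = x2 ^ (2 * k)" using v1 v2 pR c10 c20 by simp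
    then have "complex_of_real (lam ^ (2 * k)) = complex_of_real (inverse (lam ^ k))" using x1k x2k by simp
    then have "lam ^ (2 * k) = inverse (lam ^ k)" by (simp only: of_real_eq_iff)
    then have "lam ^ (2 * k) * lam ^ k = 1" using lam0 by (simp add: field_simps)
    then have "lam ^ (3 * k) = 1" by (simp add: power_add[symmetric])
    moreover have "lam ^ (3 * k) > 1" using gt1 k by (simp add: one_less_power)
    ultimately show False by simp
  qed
  have rs: "range (\<lambda>n::nat. z ^ n) \<subseteq> sphere 0 1" using cz by (auto simp: norm_power)
  show ?thesis
    unfolding Let_def z_def[symmetric] using cz nr rs dense_powers[OF cz nr] by blast
qed


end
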